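(* Let $Y_1,Y_2\subsetneq\mathbb{C}$ and $\Omega\subset\mathbb{C}$ be domains. Suppose that for every point $b\in Y_2$ there exist a point $a\in Y_1$ and a holomorphic covering map $g_b:Y_1\setminus\{a\}\to Y_2\setminus\{b\}$ which extends to a holomorphic function $g_b:Y_1\to Y_2$ with $g_b(a)=b$ and $g_b'(a)\neq0$. Then for every $b\in Y_2$ and every $a\in Y_1$ for which such a map $g_b$ exists, $$\mathscr{C}_{\Omega}^{Y_1,a}(w)\leq \mathscr{C}_{\Omega}^{Y_2,b}(w)\quad\text{for all } w\in\Omega.$$
   Context: $\mathbb{D}=\{z\in\mathbb{C}:|z|<1\}$. For domains $\Omega\subset\mathbb{C}$, $Y\subsetneq\mathbb{C}$, and points $w\in\Omega$, $s\in Y$, let $\mathcal{H}^s_w(\Omega,Y)$ be the set of holomorphic maps $h:\Omega\to Y$ with $h(w)=s$ and $h(z)\neq s$ for all $z\in\Omega\setminus\{w\}$. For a domain $Y\subsetneq\mathbb{C}$ and $v\in Y$, the Hurwitz density is $\eta_Y(v)=2/r_Y(v)$, where $r_Y(v)=\max\{h'(0): h:\mathbb{D}\to Y \text{ holomorphic},\ h(0)=v,\ h(z)\neq v \text{ for } z\in\mathbb{D}\setminus\{0\},\ h'(0)>0\}$. The Carathéodory density of the Hurwitz metric of $\Omega$ relative to $Y$ is $\mathscr{C}_{\Omega}^{Y,s}(w)=\sup\{\eta_Y(h(w))|h'(w)| : h\in\mathcal{H}^s_w(\Omega,Y)\}$, defined to be $0$ if $\mathcal{H}^s_w(\Omega,Y)=\emptyset$.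 *)

theory Defs
  imports "HOL-Complex_Analysis.Complex_Analysis"
begin

definition domain :: "complex set \<Rightarrow> bool" where
  "domain S \<longleftrightarrow> open S \<and> connected S \<and> S \<noteq> {}"

definition hurwitz_maps :: "complex set \<Rightarrow> complex set \<Rightarrow> complex \<Rightarrow> complex \<Rightarrow> (complex \<Rightarrow> complex) set" where
  "hurwitz_maps \<Omega> Y w s =
     {h. h holomorphic_on \<Omega> \<and> h ` \<Omega> \<subseteq> Y \<and> h w = s \<and> (\<forall>z\<in>\<Omega> - {w}. h z \<noteq> s)}"

text \<open>r_Y(v): the maximum of h'(0) over such maps from the unit disc (taken as a supremum).\<close>
definition hurwitz_radius :: "complex set \<Rightarrow> complex \<Rightarrow> real" where
  "hurwitz_radius Y v =
     Sup {Re (deriv h 0) | h. h \<in> hurwitz_maps (ball 0 1) Y 0 v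
                           \<and> Im (deriv h 0) = 0 \<and> Re (deriv h 0) > 0}"

definition hurwitz_density :: "complex set \<Rightarrow> complex \<Rightarrow> real" where
  "hurwitz_density Y v = 2 / hurwitz_radius Y v"

definition cara_hurwitz :: "complex set \<Rightarrow> complex set \<Rightarrow> complex \<Rightarrow> complex \<Rightarrow> ereal" where
  "cara_hurwitz \<Omega> Y s w =
     (if hurwitz_maps \<Omega> Y w s = {} then 0
      else (SUP h\<in>hurwitz_maps \<Omega> Y w s. ereal (hurwitz_density Y (h w) * cmod (deriv h w))))"

end

theory Submission
  imports Defs
begin

lemma G_periodic_int:
  fixes G :: "complex \<Rightarrow> complex"
  assumes per: "\<And>\<zeta>. Re \<zeta> < 0 \<Longrightarrow> G (\<zeta> + 2 * of_real pi * \<i>) = G \<zeta>"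
    and z: "Re \<zeta> < 0"
  shows "G (\<zeta> + of_int n * (2 * of_real pi * \<i>)) = G \<zeta>"
proof -
  have pos: "G (\<zeta> + of_nat m * (2 * of_real pi * \<i>)) = G \<zeta>" for m
  proof (induction m)
    case (Suc m)
    have "G (\<zeta> + of_nat (Suc m) * (2 * of_real pi * \<i>))
        = G ((\<zeta> + of_nat m * (2 * of_real pi * \<i>)) + 2 * of_real pi * \<i>)"
      by (simp add: algebra_simps)
    also have "\<dots> = G (\<zeta> + of_nat m * (2 * of_real pi * \<i>))"
      by (rule per) (use z in simp)
    finally show ?case using Suc by simp
  qed simp
  have negr: "G (\<zeta> - of_nat m * (2 * of_real pi * \<i>)) = G \<zeta>" for m
  proof (induction m)
    case (Suc m)
    have "G (\<zeta> - of_nat m * (2 * of_real pi * \<i>))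
        = G ((\<zeta> - of_nat (Suc m) * (2 * of_real pi * \<i>)) + 2 * of_real pi * \<i>)"
      by (simp add: algebra_simps)
    also have "\<dots> = G (\<zeta> - of_nat (Suc m) * (2 * of_real pi * \<i>))"
      by (rule per) (use z in simp)
    finally show ?case using Suc by simp
  qed simp
  show ?thesis
  proof (cases n)
    case (nonneg m)
    then show ?thesis using pos[of m] by simp
  next
    case (neg m)
    then have e: "of_int n = - (of_nat (Suc m) :: complex)"
      by (simp only: of_int_minus of_int_of_nat_eq)
    have "\<zeta> + of_int n * (2 * of_real pi * \<i>) = \<zeta> - of_nat (Suc m) * (2 * of_real pi * \<i>)"
      unfolding e by (simp only: mult_minus_left diff_conv_add_uminus)
    then show ?thesis by (simp only: negr)
  qed
qed

lemma hurwitz_lift: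
  fixes g k :: "complex \<Rightarrow> complex"
  assumes Y1: "open Y1" "a \<in> Y1" and holg: "g holomorphic_on Y1" and ga: "g a = b"
    and dga: "deriv g a \<noteq> 0"
    and cov: "covering_space (Y1 - {a}) g (Y2 - {b})"
    and k: "k \<in> hurwitz_maps (ball 0 1) Y2 0 b"
  obtains kt where "kt \<in> hurwitz_maps (ball 0 1) Y1 0 a" "\<And>z. z \<in> ball 0 1 \<Longrightarrow> g (kt z) = k z"
proof -
  from k have holk: "k holomorphic_on ball 0 1" and kim: "k ` ball 0 1 \<subseteq> Y2"
    and k0: "k 0 = b" and kne: "\<And>z. z \<in> ball 0 1 \<Longrightarrow> z \<noteq> 0 \<Longrightarrow> k z \<noteq> b"
    by (auto simp: hurwitz_maps_def)
  obtain r where r: "r > 0" "ball a r \<subseteq> Y1" "inj_on g (ball a r)"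
    using has_complex_derivative_locally_injective[OF holg Y1(2) Y1(1) dga] by blast
  define U where "U = ball a r"
  have holgU: "g holomorphic_on U" using holomorphic_on_subset[OF holg] r unfolding U_def by blast
  obtain psi where psihol: "psi holomorphic_on g ` U" and psig: "\<And>z. z \<in> U \<Longrightarrow> psi (g z) = z"
    using holomorphic_has_inverse[OF holgU _ ] r unfolding U_def by (metis open_ball)
  have openV: "open (g ` U)" using open_mapping_thm3[OF holgU] r unfolding U_def by simp
  have aU: "a \<in> U" using r unfolding U_def by simp
  have bV: "b \<in> g ` U" using ga aU by blast
  have psiV: "\<And>y. y \<in> g ` U \<Longrightarrow> psi y \<in> U \<and> g (psi y) = y" using psig by auto
  have "isCont k 0"
    using holomorphic_on_imp_continuous_on[OF holk] by (simp add: continuous_on_eq_continuous_at)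
  then obtain eps where eps: "eps > 0" "ball b eps \<subseteq> g ` U"
    using openV bV by (meson openE)
  obtain d where d: "d > 0" "k ` ball 0 d \<subseteq> ball b eps"
    using \<open>isCont k 0\<close> eps(1) k0 unfolding continuous_at_ball by metis
  define \<delta> where "\<delta> = min d (1/2)"
  have \<delta>: "0 < \<delta>" "\<delta> < 1" using d by (auto simp: \<delta>_def)
  have k\<delta>: "k z \<in> g ` U" if "z \<in> ball 0 \<delta>" for z
  proof -
    have "z \<in> ball 0 d" using that by (auto simp: \<delta>_def)
    then show ?thesis using d eps by blast
  qed
  have \<delta>D: "ball 0 \<delta> \<subseteq> ball (0::complex) 1" using \<delta> by auto
  define L where "L = {z::complex. Re z < 0}"
  define f where "f = (\<lambda>\<zeta>. k (exp \<zeta>))"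
  have expL: "exp \<zeta> \<in> ball 0 1 - {0}" if "\<zeta> \<in> L" for \<zeta>
    using that by (simp add: L_def norm_exp_eq_Re)
  have holf: "f holomorphic_on L"
    unfolding f_def
    by (rule holomorphic_on_compose_gen[of exp L k "ball 0 1", unfolded o_def])
       (use holk expL in \<open>auto intro!: holomorphic_intros\<close>)
  have contf: "continuous_on L f" using holf holomorphic_on_imp_continuous_on by blast
  have fim: "f \<in> L \<rightarrow> Y2 - {b}"
    using expL kim kne by (force simp: f_def)
  define \<zeta>0 where "\<zeta>0 = complex_of_real (ln \<delta> - 1)"
  have ln\<delta>: "ln \<delta> < 0" using \<delta> by simp
  have \<zeta>0L: "\<zeta>0 \<in> L" using ln\<delta> by (simp add: \<zeta>0_def L_def)
  define L\<delta> where "L\<delta> = {z::complex. Re z < ln \<delta>}"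
  have L\<delta>L: "L\<delta> \<subseteq> L" using ln\<delta> by (auto simp: L\<delta>_def L_def)
  have expL\<delta>: "exp \<zeta> \<in> ball 0 \<delta> - {0}" if "\<zeta> \<in> L\<delta>" for \<zeta>
  proof -
    have "exp (Re \<zeta>) < exp (ln \<delta>)" using that by (simp add: L\<delta>_def)
    then show ?thesis using \<delta> by (simp add: norm_exp_eq_Re)
  qed
  have \<zeta>0L\<delta>: "\<zeta>0 \<in> L\<delta>" by (simp add: \<zeta>0_def L\<delta>_def)
  define \<alpha> where "\<alpha> = psi (k (exp \<zeta>0))"
  have k\<zeta>0: "k (exp \<zeta>0) \<in> g ` U" using k\<delta> expL\<delta>[OF \<zeta>0L\<delta>] by blast
  have \<alpha>U: "\<alpha> \<in> U" and g\<alpha>: "g \<alpha> = k (exp \<zeta>0)" using psiV[OF k\<zeta>0] by (auto simp: \<alpha>_def)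
  have "k (exp \<zeta>0) \<noteq> b" using kne expL[OF \<zeta>0L] by blast
  then have \<alpha>C: "\<alpha> \<in> Y1 - {a}" using \<alpha>U g\<alpha> ga r unfolding U_def by auto
  have feq: "f \<zeta>0 = g \<alpha>" by (simp add: f_def g\<alpha>)
  have convL: "convex L" unfolding L_def by (rule convex_halfspace_Re_lt)
  have openL: "open L" unfolding L_def by (rule open_halfspace_Re_lt)
  obtain G where contG: "continuous_on L G" and GL: "G \<in> L \<rightarrow> Y1 - {a}" and G0: "G \<zeta>0 = \<alpha>"
      and gG: "\<And>y. y \<in> L \<Longrightarrow> g (G y) = f y"
    using covering_space_lift_strong[OF cov \<alpha>C \<zeta>0L convex_imp_simply_connected[OF convL]
        open_imp_locally_path_connected[OF openL] contf fim feq] by metis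
  have openC: "open (Y1 - {a})" using Y1 by (simp add: open_Diff)
  have holG: "G holomorphic_on L"
    by (rule covering_space_lift_is_holomorphic[OF cov openC holomorphic_on_subset[OF holg] holf fim GL contG])
       (use gG in auto)
  have holpk: "(\<lambda>\<zeta>. psi (k (exp \<zeta>))) holomorphic_on L\<delta>"
  proof -
    have "(k \<circ> exp) holomorphic_on L\<delta>"
      by (rule holomorphic_on_compose_gen[of exp L\<delta> k "ball 0 1"])
         (use holk expL\<delta> \<delta>D in \<open>auto intro!: holomorphic_intros\<close>)
    then have "(psi \<circ> (k \<circ> exp)) holomorphic_on L\<delta>"
      by (rule holomorphic_on_compose_gen[OF _ psihol]) (use k\<delta> expL\<delta> in auto)
    then show ?thesis by (simp add: o_def)
  qed
  have pkC: "psi (k (exp \<zeta>)) \<in> Y1 - {a}" "g (psi (k (exp \<zeta>))) = k (exp \<zeta>)" if "\<zeta> \<in> L\<delta>" for \<zeta>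
  proof -
    have m: "k (exp \<zeta>) \<in> g ` U" using k\<delta> expL\<delta>[OF that] by blast
    have "k (exp \<zeta>) \<noteq> b" using kne expL\<delta>[OF that] \<delta>D by blast
    then show "psi (k (exp \<zeta>)) \<in> Y1 - {a}" "g (psi (k (exp \<zeta>))) = k (exp \<zeta>)"
      using psiV[OF m] ga r unfolding U_def by auto
  qed
  have GL\<delta>: "G \<zeta> = psi (k (exp \<zeta>))" if "\<zeta> \<in> L\<delta>" for \<zeta>
  proof (rule covering_space_lift_unique[OF cov, of G \<zeta>0 "\<lambda>\<zeta>. psi (k (exp \<zeta>))" L\<delta> f])
    show "G \<zeta>0 = psi (k (exp \<zeta>0))" using G0 \<alpha>_def by simp
    show "continuous_on L\<delta> f" using contf L\<delta>L continuous_on_subset by blast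
    show "f \<in> L\<delta> \<rightarrow> Y2 - {b}" using fim L\<delta>L by blast
    show "continuous_on L\<delta> G" using contG L\<delta>L continuous_on_subset by blast
    show "G \<in> L\<delta> \<rightarrow> Y1 - {a}" using GL L\<delta>L by blast
    show "\<And>x. x \<in> L\<delta> \<Longrightarrow> f x = g (G x)" using gG L\<delta>L by auto
    show "continuous_on L\<delta> (\<lambda>\<zeta>. psi (k (exp \<zeta>)))" using holpk holomorphic_on_imp_continuous_on by blast
    show "(\<lambda>\<zeta>. psi (k (exp \<zeta>))) \<in> L\<delta> \<rightarrow> Y1 - {a}" using pkC by blast
    show "\<And>x. x \<in> L\<delta> \<Longrightarrow> f x = g (psi (k (exp x)))" using pkC by (simp add: f_def)
    show "connected L\<delta>" unfolding L\<delta>_def by (rule convex_connected[OF convex_halfspace_Re_lt])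
  qed (use \<zeta>0L\<delta> that in auto)
  define T where "T = 2 * of_real pi * \<i>"
  have expT: "exp (\<zeta> + T) = exp \<zeta>" for \<zeta> by (simp add: T_def exp_add)
  have TL: "\<zeta> + T \<in> L" if "\<zeta> \<in> L" for \<zeta> using that by (simp add: L_def T_def)
  have Gper: "G (\<zeta> + T) = G \<zeta>" if "\<zeta> \<in> L" for \<zeta>
  proof (rule covering_space_lift_unique[OF cov, of "\<lambda>\<zeta>. G (\<zeta> + T)" \<zeta>0 G L f])
    have "\<zeta>0 + T \<in> L\<delta>" using \<zeta>0L\<delta> by (simp add: L\<delta>_def T_def)
    then show "G (\<zeta>0 + T) = G \<zeta>0" using GL\<delta> G0 expT \<alpha>_def by simp
    show "continuous_on L (\<lambda>\<zeta>. G (\<zeta> + T))"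
      by (rule continuous_on_compose2[OF contG]) (use TL in \<open>auto intro!: continuous_intros\<close>)
    show "(\<lambda>\<zeta>. G (\<zeta> + T)) \<in> L \<rightarrow> Y1 - {a}" using GL TL by blast
    show "\<And>x. x \<in> L \<Longrightarrow> f x = g (G (x + T))" using gG TL expT by (simp add: f_def)
    show "\<And>x. x \<in> L \<Longrightarrow> f x = g (G x)" using gG by simp
    show "connected L" using convL convex_connected by blast
  qed (use contf fim contG GL \<zeta>0L that in auto)
  have Gexp: "G z1 = G z2" if zz: "z1 \<in> L" "z2 \<in> L" "exp z1 = exp z2" for z1 z2
  proof -
    obtain n :: int where n: "z1 = z2 + of_int (2 * n) * pi * \<i>" using zz(3) exp_eq by blast
    have "z1 = z2 + of_int n * (2 * of_real pi * \<i>)" using n by simp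
    moreover have "G (z2 + of_int n * (2 * of_real pi * \<i>)) = G z2"
      by (rule G_periodic_int) (use Gper zz(2) in \<open>auto simp: L_def T_def\<close>)
    ultimately show ?thesis by simp
  qed
  define kt where "kt = (\<lambda>z. if z = 0 then a else G (Ln z))"
  have LnL: "Ln z \<in> L" if "z \<in> ball 0 1" "z \<noteq> 0" for z
    using that by (simp add: L_def ln_less_zero)
  define A1 where "A1 = ball (0::complex) 1 - \<real>\<^sub>\<le>\<^sub>0"
  define A2 where "A2 = ball (0::complex) 1 - uminus ` \<real>\<^sub>\<le>\<^sub>0"
  have "0 \<in> (\<real>\<^sub>\<le>\<^sub>0 :: complex set)" by simp
  have hol1: "kt holomorphic_on A1"
  proof -
    have "(G \<circ> Ln) holomorphic_on A1"
      by (rule holomorphic_on_compose_gen[OF _ holG])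
         (auto simp: A1_def intro!: holomorphic_intros LnL)
    then show ?thesis
      by (rule holomorphic_transform) (auto simp: A1_def kt_def)
  qed
  have hol2: "kt holomorphic_on A2"
  proof -
    have mem: "- z \<notin> \<real>\<^sub>\<le>\<^sub>0" "z \<in> ball 0 1" "z \<noteq> 0" if "z \<in> A2" for z
    proof -
      have z: "z \<in> ball 0 1" "z \<notin> uminus ` \<real>\<^sub>\<le>\<^sub>0" using that by (auto simp: A2_def)
      show "z \<in> ball 0 1" using z by simp
      show "- z \<notin> \<real>\<^sub>\<le>\<^sub>0" using z(2) by (metis image_eqI minus_minus)
      show "z \<noteq> 0" using z(2) by (metis image_eqI minus_zero nonpos_Reals_zero_I)
    qed
    have inL: "Ln (- z) + of_real pi * \<i> \<in> L" if "z \<in> A2" for z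
      using mem[OF that] by (simp add: L_def ln_less_zero)
    have "(G \<circ> (\<lambda>z. Ln (- z) + of_real pi * \<i>)) holomorphic_on A2"
      by (rule holomorphic_on_compose_gen[OF _ holG])
         (use mem inL in \<open>auto intro!: holomorphic_intros\<close>)
    then show ?thesis
    proof (rule holomorphic_transform)
      fix z :: complex assume z: "z \<in> A2"
      have "exp (Ln (- z) + of_real pi * \<i>) = exp (Ln z)"
        using mem[OF z] by (simp add: exp_add)
      then show "(G \<circ> (\<lambda>z. Ln (- z) + of_real pi * \<i>)) z = kt z"
        using Gexp[OF inL[OF z] LnL] mem[OF z] by (simp add: kt_def)
    qed
  qed
  have hol3: "kt holomorphic_on ball 0 \<delta>"
  proof -
    have "(psi \<circ> k) holomorphic_on ball 0 \<delta>"
      by (rule holomorphic_on_compose_gen[OF holomorphic_on_subset[OF holk \<delta>D] psihol]) (use k\<delta> in auto)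
    then show ?thesis
    proof (rule holomorphic_transform)
      fix z :: complex assume z: "z \<in> ball 0 \<delta>"
      show "(psi \<circ> k) z = kt z"
      proof (cases "z = 0")
        case True then show ?thesis using psig[OF aU] ga k0 by (simp add: kt_def)
      next
        case False
        have "Ln z \<in> L\<delta>" using z False \<delta> by (simp add: L\<delta>_def)
        then show ?thesis using GL\<delta> False by (simp add: kt_def)
      qed
    qed
  qed
  have cover: "ball 0 1 = A1 \<union> A2 \<union> ball 0 \<delta>"
  proof
    show "A1 \<union> A2 \<union> ball 0 \<delta> \<subseteq> ball 0 1" using \<delta>D by (auto simp: A1_def A2_def)
    show "ball 0 1 \<subseteq> A1 \<union> A2 \<union> ball 0 \<delta>"
    proof
      fix z :: complex assume z: "z \<in> ball 0 1"
      show "z \<in> A1 \<union> A2 \<union> ball 0 \<delta>"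
      proof (cases "z = 0")
        case True then show ?thesis using \<delta> by simp
      next
        case False
        have "\<not> (z \<in> \<real>\<^sub>\<le>\<^sub>0 \<and> z \<in> uminus ` \<real>\<^sub>\<le>\<^sub>0)"
        proof
          assume "z \<in> \<real>\<^sub>\<le>\<^sub>0 \<and> z \<in> uminus ` \<real>\<^sub>\<le>\<^sub>0"
          then have "Re z \<le> 0" "Im z = 0" "Re z \<ge> 0"
            by (auto simp: complex_nonpos_Reals_iff)
          then have "z = 0" by (simp add: complex_eq_iff)
          then show False using False by simp
        qed
        then show ?thesis using z by (auto simp: A1_def A2_def)
      qed
    qed
  qed
  have open1: "open A1" unfolding A1_def by (intro open_Diff open_ball closed_nonpos_Reals_complex)
  have open2: "open A2" unfolding A2_def
    by (intro open_Diff open_ball closed_negations closed_nonpos_Reals_complex)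
  have holkt: "kt holomorphic_on ball 0 1"
    unfolding cover by (intro holomorphic_on_Un hol1 hol2 hol3 open1 open2 open_Un open_ball)
  show ?thesis
  proof (rule that)
    show "kt \<in> hurwitz_maps (ball 0 1) Y1 0 a"
      unfolding hurwitz_maps_def using holkt Y1(2) GL LnL by (force simp: kt_def)
    fix z :: complex assume z: "z \<in> ball 0 1"
    show "g (kt z) = k z"
    proof (cases "z = 0")
      case True then show ?thesis using ga k0 by (simp add: kt_def)
    next
      case False then show ?thesis using gG[OF LnL[OF z False]] by (simp add: kt_def f_def)
    qed
  qed
qed

lemma hurwitz_deriv_bounded:
  assumes "Y \<noteq> UNIV" "v \<in> Y"
  obtains M where "\<And>h. h \<in> hurwitz_maps (ball 0 1) Y 0 v \<Longrightarrow> cmod (deriv h 0) \<le> M"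
proof -
  obtain p where p: "p \<notin> Y" using assms(1) by blast
  have pv: "p \<noteq> v" using p assms(2) by blast
  obtain R where Rpos: "\<And>z. 0 < R z"
    and RL: "\<And>f. \<lbrakk>f holomorphic_on cball 0 (R(f 0));
                 \<And>z. norm z \<le> R(f 0) \<Longrightarrow> f z \<noteq> 0 \<and> f z \<noteq> 1\<rbrakk> \<Longrightarrow> norm(deriv f 0) < 1"
    using Landau_Picard by metis
  define R0 where "R0 = R (-1)"
  have R0: "R0 > 0" using Rpos by (simp add: R0_def)
  show ?thesis
  proof (rule that)
    fix h assume h: "h \<in> hurwitz_maps (ball 0 1) Y 0 v"
    then have holh: "h holomorphic_on ball 0 1" and him: "h ` ball 0 1 \<subseteq> Y"
      and h0: "h 0 = v" and hne: "\<And>z. z \<in> ball 0 1 \<Longrightarrow> z \<noteq> 0 \<Longrightarrow> h z \<noteq> v"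
      by (auto simp: hurwitz_maps_def)
    define F where "F = (\<lambda>z. (p - h z) / (p - v))"
    have holF: "F holomorphic_on ball 0 1" unfolding F_def using pv
      by (intro holomorphic_intros holh) simp
    have Fnz: "F z \<noteq> 0" if "z \<in> ball 0 1" for z
    proof -
      have "h z \<in> Y" using that him by blast
      then have "p - h z \<noteq> 0" using p by auto
      then show ?thesis using pv by (simp add: F_def)
    qed
    obtain Lg where holLg: "Lg holomorphic_on ball 0 1" and expLg: "\<And>z. z \<in> ball 0 1 \<Longrightarrow> exp (Lg z) = F z"
      using holomorphic_logarithm_exists[OF convex_ball open_ball holF Fnz, of 0] by auto
    define L where "L = (\<lambda>z. Lg z - Lg 0)"
    have F0: "F 0 = 1" using pv h0 by (simp add: F_def)
    have holL: "L holomorphic_on ball 0 1" unfolding L_def by (intro holomorphic_intros holLg)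
    have expL: "exp (L z) = F z" if "z \<in> ball 0 1" for z
      using expLg[OF that] expLg[of 0] F0 by (simp add: L_def exp_diff)
    have L0: "L 0 = 0" by (simp add: L_def)
    have hL: "h z = p - (p - v) * exp (L z)" if "z \<in> ball 0 1" for z
      using expL[OF that] pv by (simp add: F_def field_simps)
    have Lomit: "L z \<noteq> of_int n * (2 * of_real pi * \<i>)" if "z \<in> ball 0 1" "n \<noteq> 0" for z n
    proof
      assume eq: "L z = of_int n * (2 * of_real pi * \<i>)"
      then have "exp (L z) = 1" by (simp add: exp_eq_1)
      then have "F z = 1" using expL[OF that(1)] by simp
      then have "h z = v" using pv by (simp add: F_def field_simps)
      then have "z = 0" using hne that(1) by blast
      then show False using eq L0 that(2) by simp
    qed
    define \<phi> where "\<phi> = (\<lambda>z. (L (z / (2 * of_real R0)) - 2 * of_real pi * \<i>) / (2 * of_real pi * \<i>))"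
    have \<phi>0: "\<phi> 0 = -1" by (simp add: \<phi>_def L0)
    have inball: "z / (2 * of_real R0) \<in> ball 0 1" if "norm z \<le> R0" for z :: complex
    proof -
      have "norm (z / (2 * of_real R0)) = norm z / (2 * R0)" using R0 by (simp add: norm_divide)
      also have "\<dots> \<le> R0 / (2 * R0)" using that R0 by (simp add: divide_right_mono)
      also have "\<dots> < 1" using R0 by simp
      finally show ?thesis by simp
    qed
    have hol\<phi>: "\<phi> holomorphic_on cball 0 R0"
    proof -
      have "(L \<circ> (\<lambda>z. z / (2 * of_real R0))) holomorphic_on cball 0 R0"
        by (rule holomorphic_on_compose_gen[OF _ holL]) (use inball R0 in \<open>auto intro!: holomorphic_intros\<close>)
      then show ?thesis unfolding \<phi>_def by (intro holomorphic_intros) (auto simp: o_def)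
    qed
    have "norm (deriv \<phi> 0) < 1"
    proof (rule RL)
      show "\<phi> holomorphic_on cball 0 (R (\<phi> 0))" using hol\<phi> by (simp add: \<phi>0 R0_def)
      fix z :: complex assume "norm z \<le> R (\<phi> 0)"
      then have zb: "z / (2 * of_real R0) \<in> ball 0 1" using inball by (simp add: \<phi>0 R0_def)
      have "L (z / (2 * of_real R0)) \<noteq> of_int 1 * (2 * of_real pi * \<i>)" by (rule Lomit[OF zb]) simp
      moreover have "L (z / (2 * of_real R0)) \<noteq> of_int 2 * (2 * of_real pi * \<i>)" by (rule Lomit[OF zb]) simp
      ultimately show "\<phi> z \<noteq> 0 \<and> \<phi> z \<noteq> 1"
        by (auto simp: \<phi>_def field_simps)
    qed
    have dL: "(L has_field_derivative deriv L 0) (at 0)"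
      using holL by (intro holomorphic_derivI[of L "ball 0 1"]) auto
    have "(\<phi> has_field_derivative (deriv L 0 * (1 / (2 * of_real R0))) / (2 * of_real pi * \<i>)) (at 0)"
    proof -
      have d1: "((\<lambda>z::complex. z / (2 * of_real R0)) has_field_derivative (1 / (2 * of_real R0))) (at 0)"
        using R0 by (auto intro!: derivative_eq_intros)
      have "((\<lambda>z. L (z / (2 * of_real R0))) has_field_derivative deriv L 0 * (1 / (2 * of_real R0))) (at 0)"
      proof -
        have dL': "(L has_field_derivative deriv L 0) (at (0 / (2 * of_real R0)))" using dL by simp
        show ?thesis using DERIV_chain2[OF dL' d1] .
      qed
      then show ?thesis unfolding \<phi>_def by (auto intro!: derivative_eq_intros)
    qed
    then have "deriv \<phi> 0 = (deriv L 0 * (1 / (2 * of_real R0))) / (2 * of_real pi * \<i>)"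
      by (rule DERIV_imp_deriv)
    then have "deriv L 0 = deriv \<phi> 0 * (4 * of_real (R0 * pi) * \<i>)"
      using R0 by (simp add: field_simps)
    then have "norm (deriv L 0) = norm (deriv \<phi> 0) * (4 * R0 * pi)"
      using R0 pi_gt_zero by (simp add: norm_mult)
    also have "\<dots> < 1 * (4 * R0 * pi)"
      using \<open>norm (deriv \<phi> 0) < 1\<close> R0 pi_gt_zero by (intro mult_strict_right_mono) auto
    finally have bL: "norm (deriv L 0) < 4 * pi * R0" by (simp add: mult_ac)
    have "((\<lambda>z. p - (p - v) * exp (L z)) has_field_derivative - ((p - v) * deriv L 0)) (at 0)"
      using dL L0 by (auto intro!: derivative_eq_intros)
    then have "(h has_field_derivative - ((p - v) * deriv L 0)) (at 0)"
      by (rule has_field_derivative_transform_within_open[of _ _ _ "ball 0 1"]) (use hL in auto)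
    then have "deriv h 0 = - ((p - v) * deriv L 0)" by (rule DERIV_imp_deriv)
    then have "cmod (deriv h 0) = cmod (p - v) * cmod (deriv L 0)" by (simp add: norm_mult)
    also have "\<dots> \<le> cmod (p - v) * (4 * pi * R0)"
      using bL by (intro mult_left_mono) auto
    finally show "cmod (deriv h 0) \<le> cmod (p - v) * (4 * pi * R0)" .
  qed
qed

lemma deriv_comp_open:
  fixes f g :: "complex \<Rightarrow> complex"
  assumes "f holomorphic_on A" "open A" "w \<in> A" "g holomorphic_on B" "open B" "f ` A \<subseteq> B"
  shows "deriv (g \<circ> f) w = deriv g (f w) * deriv f w"
proof -
  have "f w \<in> B" using assms by blast
  have "((\<lambda>z. g (f z)) has_field_derivative deriv g (f w) * deriv f w) (at w)"
    by (rule DERIV_chain2[OF holomorphic_derivI[OF assms(4,5) \<open>f w \<in> B\<close>] holomorphic_derivI[OF assms(1-3)]])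
  then show ?thesis by (simp add: o_def DERIV_imp_deriv)
qed

lemma deriv_eq_on_open:
  fixes f g :: "complex \<Rightarrow> complex"
  assumes "f holomorphic_on A" "open A" "w \<in> A" "\<And>z. z \<in> A \<Longrightarrow> f z = g z"
  shows "deriv g w = deriv f w"
proof -
  have "(f has_field_derivative deriv f w) (at w)" by (rule holomorphic_derivI[OF assms(1-3)])
  then have "(g has_field_derivative deriv f w) (at w)"
    by (rule has_field_derivative_transform_within_open[OF _ assms(2,3)]) (use assms(4) in auto)
  then show ?thesis by (rule DERIV_imp_deriv)
qed

lemma hurwitz_rotate:
  fixes kt :: "complex \<Rightarrow> complex"
  assumes kt: "kt \<in> hurwitz_maps (ball 0 1) Y 0 a" and lam: "norm u = 1"
  shows "(\<lambda>z. kt (u * z)) \<in> hurwitz_maps (ball 0 1) Y 0 a"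
    "deriv (\<lambda>z. kt (u * z)) 0 = u * deriv kt 0"
proof -
  from kt have holk: "kt holomorphic_on ball 0 1" and kim: "kt ` ball 0 1 \<subseteq> Y"
    and k0: "kt 0 = a" and kne: "\<And>z. z \<in> ball 0 1 \<Longrightarrow> z \<noteq> 0 \<Longrightarrow> kt z \<noteq> a"
    by (auto simp: hurwitz_maps_def)
  have inb: "u * z \<in> ball 0 1" if "z \<in> ball 0 1" for z
    using that lam by (simp add: norm_mult)
  have lam0: "u \<noteq> 0" using lam by auto
  have hol: "(kt \<circ> (\<lambda>z. u * z)) holomorphic_on ball 0 1"
    by (rule holomorphic_on_compose_gen[OF _ holk]) (use inb in \<open>auto intro!: holomorphic_intros\<close>)
  show "(\<lambda>z. kt (u * z)) \<in> hurwitz_maps (ball 0 1) Y 0 a"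
    unfolding hurwitz_maps_def using hol inb kim k0 kne lam0 by (auto simp: o_def)
  have "deriv (kt \<circ> (\<lambda>z. u * z)) 0 = deriv kt (u * 0) * deriv (\<lambda>z. u * z) 0"
    by (rule deriv_comp_open[of _ "ball 0 1" _ _ "ball 0 1"]) (use inb holk in \<open>auto intro!: holomorphic_intros\<close>)
  then show "deriv (\<lambda>z. kt (u * z)) 0 = u * deriv kt 0" by (simp add: o_def)
qed

lemma hurwitz_nonempty:
  assumes "open Y" "v \<in> Y"
  obtains e where "e > 0" "(\<lambda>z. v + of_real e * z) \<in> hurwitz_maps (ball 0 1) Y 0 v"
     "deriv (\<lambda>z. v + of_real e * z) 0 = of_real e"
proof -
  obtain e where e: "e > 0" "ball v e \<subseteq> Y" using assms openE by blast
  show ?thesis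
  proof (rule that[of "e/2"])
    show "e / 2 > 0" using e by simp
    have "v + of_real (e/2) * z \<in> Y" if "z \<in> ball 0 1" for z
    proof -
      have "dist v (v + of_real (e/2) * z) = e/2 * norm z" using e by (simp add: dist_norm norm_mult)
      also have "\<dots> < e" using that e by simp
      finally show ?thesis using e by (metis mem_ball subsetD)
    qed
    then show "(\<lambda>z. v + of_real (e/2) * z) \<in> hurwitz_maps (ball 0 1) Y 0 v"
      unfolding hurwitz_maps_def using e by (auto intro!: holomorphic_intros)
    have "((\<lambda>z. v + of_real (e/2) * z) has_field_derivative of_real (e/2)) (at 0)"
      by (auto intro!: derivative_eq_intros)
    then show "deriv (\<lambda>z. v + of_real (e/2) * z) 0 = of_real (e/2)" by (rule DERIV_imp_deriv)
  qed
qed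

lemma hurwitz_radius_compare:
  fixes g :: "complex \<Rightarrow> complex"
  assumes Y1: "open Y1" "Y1 \<noteq> UNIV" "a \<in> Y1" and holg: "g holomorphic_on Y1" and ga: "g a = b"
    and dga: "deriv g a \<noteq> 0" and cov: "covering_space (Y1 - {a}) g (Y2 - {b})"
    and Y2: "open Y2" "b \<in> Y2"
  shows "0 < hurwitz_radius Y2 b" "hurwitz_radius Y2 b \<le> cmod (deriv g a) * hurwitz_radius Y1 a"
proof -
  define S1 where "S1 = {Re (deriv h 0) | h. h \<in> hurwitz_maps (ball 0 1) Y1 0 a
                           \<and> Im (deriv h 0) = 0 \<and> Re (deriv h 0) > 0}"
  define S2 where "S2 = {Re (deriv h 0) | h. h \<in> hurwitz_maps (ball 0 1) Y2 0 b
                           \<and> Im (deriv h 0) = 0 \<and> Re (deriv h 0) > 0}"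
  define c where "c = cmod (deriv g a)"
  have c: "c > 0" using dga by (simp add: c_def)
  obtain M where M: "\<And>h. h \<in> hurwitz_maps (ball 0 1) Y1 0 a \<Longrightarrow> cmod (deriv h 0) \<le> M"
    using hurwitz_deriv_bounded[OF Y1(2,3)] by blast
  have bdd1: "bdd_above S1"
    unfolding bdd_above_def S1_def using M complex_Re_le_cmod order_trans by blast
  have key: "x / c \<in> S1" if xS: "x \<in> S2" for x
  proof -
    obtain k where k: "k \<in> hurwitz_maps (ball 0 1) Y2 0 b" and kx: "x = Re (deriv k 0)"
      and kim0: "Im (deriv k 0) = 0" and xpos: "x > 0"
      using xS unfolding S2_def by blast
    have dk: "deriv k 0 = of_real x" using kx kim0 by (simp add: complex_eq_iff)
    obtain kt where kt: "kt \<in> hurwitz_maps (ball 0 1) Y1 0 a"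
      and gkt: "\<And>z. z \<in> ball 0 1 \<Longrightarrow> g (kt z) = k z"
      using hurwitz_lift[OF Y1(1,3) holg ga dga cov k] by blast
    from kt have holkt: "kt holomorphic_on ball 0 1" and ktim: "kt ` ball 0 1 \<subseteq> Y1" and kt0: "kt 0 = a"
      by (auto simp: hurwitz_maps_def)
    have holgkt: "(g \<circ> kt) holomorphic_on ball 0 1"
      by (rule holomorphic_on_compose_gen[OF holkt holg ktim])
    have "deriv k 0 = deriv (g \<circ> kt) 0"
      by (rule deriv_eq_on_open[OF holgkt]) (use gkt in auto)
    also have "\<dots> = deriv g a * deriv kt 0"
      using deriv_comp_open[OF holkt _ _ holg Y1(1) ktim] kt0 by simp
    finally have dkt: "deriv k 0 = deriv g a * deriv kt 0" .
    define u where "u = deriv g a / of_real c"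
    have nu: "norm u = 1" using c by (simp add: u_def norm_divide c_def)
    have K: "(\<lambda>z. kt (u * z)) \<in> hurwitz_maps (ball 0 1) Y1 0 a"
      and dK: "deriv (\<lambda>z. kt (u * z)) 0 = u * deriv kt 0"
      using hurwitz_rotate[OF kt nu] by auto
    have "u * deriv kt 0 = of_real (x / c)"
      using dkt dk c by (simp add: u_def field_simps)
    then have "deriv (\<lambda>z. kt (u * z)) 0 = of_real (x / c)" using dK by simp
    then show ?thesis unfolding S1_def using K xpos c
      by (intro CollectI exI[of _ "\<lambda>z. kt (u * z)"]) auto
  qed
  obtain e where e: "e > 0" "(\<lambda>z. b + of_real e * z) \<in> hurwitz_maps (ball 0 1) Y2 0 b"
     "deriv (\<lambda>z. b + of_real e * z) 0 = of_real e"
    using hurwitz_nonempty[OF Y2] by blast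
  have eS2: "e \<in> S2" unfolding S2_def using e
    by (intro CollectI exI[of _ "\<lambda>z. b + of_real e * z"]) auto
  have ne1: "S1 \<noteq> {}" using key[OF eS2] by blast
  have le: "x \<le> c * Sup S1" if "x \<in> S2" for x
  proof -
    have "x / c \<le> Sup S1" using cSup_upper[OF key[OF that] bdd1] .
    then show ?thesis using c by (simp add: field_simps)
  qed
  have bdd2: "bdd_above S2" using le unfolding bdd_above_def by blast
  have "e \<le> Sup S2" using cSup_upper[OF eS2 bdd2] .
  then show "0 < hurwitz_radius Y2 b" using e(1) by (simp add: hurwitz_radius_def S2_def)
  have "Sup S2 \<le> c * Sup S1" using cSup_least[of S2] eS2 le by blast
  then show "hurwitz_radius Y2 b \<le> cmod (deriv g a) * hurwitz_radius Y1 a"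
    by (simp add: hurwitz_radius_def S1_def S2_def c_def)
qed

theorem theorem3p14:
  fixes Y1 Y2 \<Omega> :: "complex set"
  assumes "domain Y1" "Y1 \<noteq> UNIV" "domain Y2" "Y2 \<noteq> UNIV" "domain \<Omega>"
    and "\<forall>b\<in>Y2. \<exists>a\<in>Y1. \<exists>g. g holomorphic_on Y1 \<and> g ` Y1 \<subseteq> Y2 \<and> g a = b \<and> deriv g a \<noteq> 0
                     \<and> covering_space (Y1 - {a}) g (Y2 - {b})"
  shows "\<forall>b\<in>Y2. \<forall>a\<in>Y1.
           (\<exists>g. g holomorphic_on Y1 \<and> g ` Y1 \<subseteq> Y2 \<and> g a = b \<and> deriv g a \<noteq> 0
                 \<and> covering_space (Y1 - {a}) g (Y2 - {b}))
           \<longrightarrow> (\<forall>w\<in>\<Omega>. cara_hurwitz \<Omega> Y1 a w \<le> cara_hurwitz \<Omega> Y2 b w)"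
proof (intro ballI impI)
  fix b a w
  assume b: "b \<in> Y2" and a: "a \<in> Y1" and w: "w \<in> \<Omega>"
    and ex: "\<exists>g. g holomorphic_on Y1 \<and> g ` Y1 \<subseteq> Y2 \<and> g a = b \<and> deriv g a \<noteq> 0
                 \<and> covering_space (Y1 - {a}) g (Y2 - {b})"
  then obtain g where holg: "g holomorphic_on Y1" and gim: "g ` Y1 \<subseteq> Y2" and ga: "g a = b"
    and dga: "deriv g a \<noteq> 0" and cov: "covering_space (Y1 - {a}) g (Y2 - {b})"
    by blast
  have oY1: "open Y1" and oY2: "open Y2" and oO: "open \<Omega>"
    using assms(1,3,5) by (auto simp: domain_def)
  define c where "c = cmod (deriv g a)"
  have c: "c > 0" using dga by (simp add: c_def)
  have r2: "0 < hurwitz_radius Y2 b" and r21: "hurwitz_radius Y2 b \<le> c * hurwitz_radius Y1 a"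
    using hurwitz_radius_compare[OF oY1 assms(2) a holg ga dga cov oY2 b] by (auto simp: c_def)
  have r1: "0 < hurwitz_radius Y1 a"
  proof -
    have "0 < c * hurwitz_radius Y1 a" using r2 r21 by linarith
    then show ?thesis using c by (simp add: zero_less_mult_iff)
  qed
  have dens: "hurwitz_density Y1 a \<le> c * hurwitz_density Y2 b"
  proof -
    have "2 / hurwitz_radius Y1 a \<le> c * (2 / hurwitz_radius Y2 b)"
      using r1 r2 r21 c by (simp add: field_simps)
    then show ?thesis by (simp add: hurwitz_density_def)
  qed
  have d2: "hurwitz_density Y2 b \<ge> 0" using r2 by (simp add: hurwitz_density_def)
  have surj: "g ` (Y1 - {a}) = Y2 - {b}" using covering_space_imp_surjective[OF cov] .
  have comp: "g \<circ> h \<in> hurwitz_maps \<Omega> Y2 w b \<and> deriv (g \<circ> h) w = deriv g a * deriv h w"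
    if h: "h \<in> hurwitz_maps \<Omega> Y1 w a" for h
  proof -
    from h have holh: "h holomorphic_on \<Omega>" and him: "h ` \<Omega> \<subseteq> Y1" and hw: "h w = a"
      and hne: "\<And>z. z \<in> \<Omega> \<Longrightarrow> z \<noteq> w \<Longrightarrow> h z \<noteq> a"
      by (auto simp: hurwitz_maps_def)
    have "g (h z) \<noteq> b" if "z \<in> \<Omega>" "z \<noteq> w" for z
    proof -
      have "h z \<in> Y1 - {a}" using him hne that by blast
      then have "g (h z) \<in> Y2 - {b}" using surj by blast
      then show ?thesis by blast
    qed
    then have "g \<circ> h \<in> hurwitz_maps \<Omega> Y2 w b"
      unfolding hurwitz_maps_def using holomorphic_on_compose_gen[OF holh holg him] him gim hw ga
      by auto
    moreover have "deriv (g \<circ> h) w = deriv g a * deriv h w"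
      using deriv_comp_open[OF holh oO w holg oY1 him] hw by simp
    ultimately show ?thesis by blast
  qed
  show "cara_hurwitz \<Omega> Y1 a w \<le> cara_hurwitz \<Omega> Y2 b w"
  proof (cases "hurwitz_maps \<Omega> Y1 w a = {}")
    case True
    show ?thesis
    proof (cases "hurwitz_maps \<Omega> Y2 w b = {}")
      case True2: True
      show ?thesis using True True2 by (simp add: cara_hurwitz_def)
    next
      case False
      then obtain h2 where h2: "h2 \<in> hurwitz_maps \<Omega> Y2 w b" by blast
      then have "h2 w = b" by (simp add: hurwitz_maps_def)
      then have "ereal 0 \<le> ereal (hurwitz_density Y2 (h2 w) * cmod (deriv h2 w))"
        using d2 by simp
      also have "\<dots> \<le> (SUP h\<in>hurwitz_maps \<Omega> Y2 w b. ereal (hurwitz_density Y2 (h w) * cmod (deriv h w)))"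
        by (rule SUP_upper[OF h2])
      finally show ?thesis using True False by (simp add: cara_hurwitz_def zero_ereal_def)
    qed
  next
    case False
    then obtain h1 where "h1 \<in> hurwitz_maps \<Omega> Y1 w a" by blast
    then have ne2: "hurwitz_maps \<Omega> Y2 w b \<noteq> {}" using comp by blast
    have "(SUP h\<in>hurwitz_maps \<Omega> Y1 w a. ereal (hurwitz_density Y1 (h w) * cmod (deriv h w)))
        \<le> (SUP h\<in>hurwitz_maps \<Omega> Y2 w b. ereal (hurwitz_density Y2 (h w) * cmod (deriv h w)))"
    proof (rule SUP_least)
      fix h assume h: "h \<in> hurwitz_maps \<Omega> Y1 w a"
      then have hw: "h w = a" by (simp add: hurwitz_maps_def)
      have gh: "g \<circ> h \<in> hurwitz_maps \<Omega> Y2 w b" and dgh: "deriv (g \<circ> h) w = deriv g a * deriv h w"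
        using comp[OF h] by auto
      have "hurwitz_density Y1 (h w) * cmod (deriv h w) \<le> (c * hurwitz_density Y2 b) * cmod (deriv h w)"
        using dens hw by (intro mult_right_mono) auto
      also have "\<dots> = hurwitz_density Y2 ((g \<circ> h) w) * cmod (deriv (g \<circ> h) w)"
        using hw ga dgh by (simp add: c_def norm_mult)
      finally have "ereal (hurwitz_density Y1 (h w) * cmod (deriv h w))
          \<le> ereal (hurwitz_density Y2 ((g \<circ> h) w) * cmod (deriv (g \<circ> h) w))" by simp
      also have "\<dots> \<le> (SUP h\<in>hurwitz_maps \<Omega> Y2 w b. ereal (hurwitz_density Y2 (h w) * cmod (deriv h w)))"
        by (rule SUP_upper[OF gh])
      finally show "ereal (hurwitz_density Y1 (h w) * cmod (deriv h w))
          \<le> (SUP h\<in>hurwitz_maps \<Omega> Y2 w b. ereal (hurwitz_density Y2 (h w) * cmod (deriv h w)))" .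
    qed
    then show ?thesis using False ne2 by (simp add: cara_hurwitz_def)
  qed
qed

end
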